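(* Let $S$ be a finite set of axis-parallel unit squares all containing the origin, with pairwise distinct $x$-coordinates of top-right corners (and pairwise distinct $y$-coordinates). Store $S$ in a leaf-oriented red-black tree $\mathcal{T}$ keyed by the $x$-coordinate $s_x$ of the top-right corner, and for each node $v$ let $s_{\max}(v)$ (resp. $s_{\min}(v)$) be the square $s\in S(v)$ maximizing (resp. minimizing) $s_y$. For $s\in S$ define $N_{NE}(s)$, $N_{SE}(s)$, $N_{SW}(s)$, $N_{NW}(s)$ as the sets of internal nodes $v$ with $s_{\max}(\mathit{right}(v))=s$, $s_{\min}(\mathit{right}(v))=s$, $s_{\min}(\mathit{left}(v))=s$, $s_{\max}(\mathit{left}(v))=s$, respectively, and $N(s)$ as the union of these four sets and the leaf storing $s$. Let $h(s)=\max_{v\in N(s)}\mathrm{height}(v)$. Set $\mathit{col}(s)=0$ if $h(s)=0$, and otherwise $\mathit{col}(s)=4h(s)+j$, where $j=0$ if $h(s)=\max_{v\in N_{NE}(s)}\mathrm{height}(v)$, else $j=1$ if $h(s)=\max_{v\in N_{SE}(s)}\mathrm{height}(v)$, else $j=2$ if $h(s)=\max_{v\in N_{SW}(s)}\mathrm{height}(v)$, and $j=3$ otherwise. Then this coloring is conflict-free with respect to points.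
   Context: A leaf-oriented red-black tree stores one key per leaf (here one square per leaf, ordered by $s_x$), and internal nodes store splitting values strictly between consecutive keys. For a node $v$: $\mathit{left}(v)$, $\mathit{right}(v)$ are its children, $S(v)$ is the set of squares in the leaves of its subtree, and $\mathrm{height}(v)$ is the height of its subtree (0 for a leaf); $s_y$ is the $y$-coordinate of the top-right corner of $s$. A coloring is conflict-free with respect to points if every point contained in at least one square lies in some square whose color is unique among the squares containing that point. A maximum over an empty set is taken as $-\infty$. *)

theory Defs
  imports Complex_Main
begin

text \<open>An axis-parallel unit square is represented by its top-right corner (s_x, s_y);
  it is the closed square [s_x - 1, s_x] x [s_y - 1, s_y].\<close>
type_synonym square = "real \<times> real"

definition sq :: "square \<Rightarrow> (real \<times> real) set" where
  "sq s = {p. fst s - 1 \<le> fst p \<and> fst p \<le> fst s \<and> snd s - 1 \<le> snd p \<and> snd p \<le> snd s}"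

datatype rbcolor = Red | Black

datatype 'a lrbt = Lf 'a | Nd rbcolor real "'a lrbt" "'a lrbt"

fun leaves :: "'a lrbt \<Rightarrow> 'a list" where
  "leaves (Lf a) = [a]"
| "leaves (Nd c k l r) = leaves l @ leaves r"

fun height :: "'a lrbt \<Rightarrow> nat" where
  "height (Lf a) = 0"
| "height (Nd c k l r) = Suc (max (height l) (height r))"

fun subtrees :: "'a lrbt \<Rightarrow> 'a lrbt set" where
  "subtrees (Lf a) = {Lf a}"
| "subtrees (Nd c k l r) = insert (Nd c k l r) (subtrees l \<union> subtrees r)"

fun is_internal :: "'a lrbt \<Rightarrow> bool" where
  "is_internal (Lf a) = False"
| "is_internal (Nd c k l r) = True"

fun left :: "'a lrbt \<Rightarrow> 'a lrbt" where
  "left (Nd c k l r) = l"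
| "left (Lf a) = Lf a"

fun right :: "'a lrbt \<Rightarrow> 'a lrbt" where
  "right (Nd c k l r) = r"
| "right (Lf a) = Lf a"

fun search_ok :: "square lrbt \<Rightarrow> bool" where
  "search_ok (Lf a) = True"
| "search_ok (Nd c k l r) =
     (search_ok l \<and> search_ok r \<and>
      (\<forall>s\<in>set (leaves l). fst s < k) \<and> (\<forall>s\<in>set (leaves r). k < fst s))"

fun color_of :: "'a lrbt \<Rightarrow> rbcolor" where
  "color_of (Lf a) = Black"
| "color_of (Nd c k l r) = c"

fun bheight :: "'a lrbt \<Rightarrow> nat" where
  "bheight (Lf a) = 1"
| "bheight (Nd c k l r) = (if c = Black then 1 else 0) + bheight l"

fun rb_inv :: "'a lrbt \<Rightarrow> bool" where
  "rb_inv (Lf a) = True"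
| "rb_inv (Nd c k l r) =
     (rb_inv l \<and> rb_inv r \<and> bheight l = bheight r \<and>
      (c = Red \<longrightarrow> color_of l = Black \<and> color_of r = Black))"

definition is_lrb_tree_of :: "square lrbt \<Rightarrow> square set \<Rightarrow> bool" where
  "is_lrb_tree_of T S \<longleftrightarrow> set (leaves T) = S \<and> distinct (leaves T) \<and>
     sorted_wrt (\<lambda>a b. fst a < fst b) (leaves T) \<and> search_ok T \<and>
     color_of T = Black \<and> rb_inv T"

definition smax :: "square lrbt \<Rightarrow> square" where
  "smax v = (THE s. s \<in> set (leaves v) \<and> (\<forall>t\<in>set (leaves v). snd t \<le> snd s))"

definition smin :: "square lrbt \<Rightarrow> square" where
  "smin v = (THE s. s \<in> set (leaves v) \<and> (\<forall>t\<in>set (leaves v). snd s \<le> snd t))"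

definition N_NE :: "square lrbt \<Rightarrow> square \<Rightarrow> square lrbt set" where
  "N_NE T s = {v \<in> subtrees T. is_internal v \<and> smax (right v) = s}"
definition N_SE :: "square lrbt \<Rightarrow> square \<Rightarrow> square lrbt set" where
  "N_SE T s = {v \<in> subtrees T. is_internal v \<and> smin (right v) = s}"
definition N_SW :: "square lrbt \<Rightarrow> square \<Rightarrow> square lrbt set" where
  "N_SW T s = {v \<in> subtrees T. is_internal v \<and> smin (left v) = s}"
definition N_NW :: "square lrbt \<Rightarrow> square \<Rightarrow> square lrbt set" where
  "N_NW T s = {v \<in> subtrees T. is_internal v \<and> smax (left v) = s}"

definition N_all :: "square lrbt \<Rightarrow> square \<Rightarrow> square lrbt set" where
  "N_all T s = N_NE T s \<union> N_SE T s \<union> N_SW T s \<union> N_NW T s \<union> {Lf s}"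

definition hN :: "square lrbt \<Rightarrow> square \<Rightarrow> nat" where
  "hN T s = Max (height ` N_all T s)"

text \<open>"h(s) = max over N_X(s)" is false when N_X(s) is empty (max = -infinity).\<close>
definition attains :: "square lrbt \<Rightarrow> square \<Rightarrow> square lrbt set \<Rightarrow> bool" where
  "attains T s A \<longleftrightarrow> A \<noteq> {} \<and> hN T s = Max (height ` A)"

definition col :: "square lrbt \<Rightarrow> square \<Rightarrow> nat" where
  "col T s = (if hN T s = 0 then 0
     else 4 * hN T s +
       (if attains T s (N_NE T s) then 0
        else if attains T s (N_SE T s) then 1
        else if attains T s (N_SW T s) then 2 else 3))"

definition conflict_free :: "square set \<Rightarrow> (square \<Rightarrow> nat) \<Rightarrow> bool" where
  "conflict_free S c \<longleftrightarrow>
     (\<forall>p. (\<exists>s\<in>S. p \<in> sq s) \<longrightarrow>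
        (\<exists>s\<in>S. p \<in> sq s \<and> (\<forall>t\<in>S. t \<noteq> s \<and> p \<in> sq t \<longrightarrow> c t \<noteq> c s)))"

end

theory Submission
  imports Defs
begin

lemma leaves_ne: "leaves u \<noteq> []"
  by (induction u) auto

lemma finite_subtrees: "finite (subtrees T)"
  by (induction T) auto

lemma self_subtree: "T \<in> subtrees T"
  by (cases T) auto

lemma subtree_leaves: "u \<in> subtrees T \<Longrightarrow> set (leaves u) \<subseteq> set (leaves T)"
  by (induction T) auto

lemma subtree_height: "u \<in> subtrees T \<Longrightarrow> u \<noteq> T \<Longrightarrow> height u < height T"
proof (induction T)
  case (Lf a) then show ?case by simp
next
  case (Nd c k l r)
  have le: "\<And>v t. v \<in> subtrees t \<Longrightarrow> height v \<le> height t"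
  proof -
    fix v t show "v \<in> subtrees t \<Longrightarrow> height v \<le> height t"
      by (induction t) (auto simp: le_SucI le_max_iff_disj)
  qed
  from Nd.prems show ?case using le[of u l] le[of u r] by auto
qed

lemma subtree_parent: "u \<in> subtrees T \<Longrightarrow> u \<noteq> T \<Longrightarrow>
   \<exists>w\<in>subtrees T. is_internal w \<and> (left w = u \<or> right w = u)"
proof (induction T)
  case (Lf a) then show ?case by simp
next
  case (Nd c k l r)
  show ?case
  proof (cases "u = l \<or> u = r")
    case True then show ?thesis by (rule_tac x="Nd c k l r" in bexI) auto
  next
    case False
    then show ?thesis using Nd by (auto simp: self_subtree)
  qed
qed

lemma subtree_order: "search_ok T \<Longrightarrow> u1 \<in> subtrees T \<Longrightarrow> u2 \<in> subtrees T \<Longrightarrow> u1 \<noteq> u2 \<Longrightarrow>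
  height u1 = height u2 \<Longrightarrow>
  (\<forall>a\<in>set (leaves u1). \<forall>b\<in>set (leaves u2). fst a < fst b) \<or>
  (\<forall>a\<in>set (leaves u2). \<forall>b\<in>set (leaves u1). fst a < fst b)"
proof (induction T)
  case (Lf x) then show ?case by simp
next
  case (Nd c k l r)
  show ?case
  proof (cases "u1 = Nd c k l r \<or> u2 = Nd c k l r")
    case True
    then show ?thesis using Nd.prems subtree_height[of u1 "Nd c k l r"] subtree_height[of u2 "Nd c k l r"]
      by auto
  next
    case False
    then have h1: "u1 \<in> subtrees l \<or> u1 \<in> subtrees r" and h2: "u2 \<in> subtrees l \<or> u2 \<in> subtrees r"
      using Nd.prems by auto
    show ?thesis
    proof (cases "u1 \<in> subtrees l")
      case a: True
      show ?thesis
      proof (cases "u2 \<in> subtrees l")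
        case True then show ?thesis using a Nd by auto
      next
        case False
        then have "u2 \<in> subtrees r" using h2 by auto
        then show ?thesis using a Nd.prems subtree_leaves[of u1 l] subtree_leaves[of u2 r]
          by fastforce
      qed
    next
      case a: False
      then have a': "u1 \<in> subtrees r" using h1 by auto
      show ?thesis
      proof (cases "u2 \<in> subtrees r")
        case True then show ?thesis using a' Nd by auto
      next
        case False
        then have "u2 \<in> subtrees l" using h2 by auto
        then show ?thesis using a' Nd.prems subtree_leaves[of u2 l] subtree_leaves[of u1 r]
          by fastforce
      qed
    qed
  qed
qed

lemma smax_prop: assumes "set (leaves u) \<subseteq> S" "inj_on snd S"
  shows "smax u \<in> set (leaves u) \<and> (\<forall>t\<in>set (leaves u). snd t \<le> snd (smax u))"
proof -
  let ?A = "set (leaves u)"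
  have ne: "?A \<noteq> {}" using leaves_ne[of u] by simp
  have "Max (snd ` ?A) \<in> snd ` ?A" by (rule Max_in) (use ne in auto)
  then obtain m where m: "m \<in> ?A" "snd m = Max (snd ` ?A)" by auto
  have mm: "\<forall>t\<in>?A. snd t \<le> snd m" using m by auto
  have "smax u = m" unfolding smax_def
  proof (rule the_equality)
    show "m \<in> ?A \<and> (\<forall>t\<in>?A. snd t \<le> snd m)" using m mm by auto
  next
    fix y assume y: "y \<in> ?A \<and> (\<forall>t\<in>?A. snd t \<le> snd y)"
    then have "snd y = snd m" using m mm by (meson order_antisym)
    then show "y = m" using y m assms inj_onD[of snd S y m] by auto
  qed
  then show ?thesis using m mm by auto
qed

lemma smin_prop: assumes "set (leaves u) \<subseteq> S" "inj_on snd S"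
  shows "smin u \<in> set (leaves u) \<and> (\<forall>t\<in>set (leaves u). snd (smin u) \<le> snd t)"
proof -
  let ?A = "set (leaves u)"
  have ne: "?A \<noteq> {}" using leaves_ne[of u] by simp
  have "Min (snd ` ?A) \<in> snd ` ?A" by (rule Min_in) (use ne in auto)
  then obtain m where m: "m \<in> ?A" "snd m = Min (snd ` ?A)" by auto
  have mm: "\<forall>t\<in>?A. snd m \<le> snd t" using m by auto
  have "smin u = m" unfolding smin_def
  proof (rule the_equality)
    show "m \<in> ?A \<and> (\<forall>t\<in>?A. snd m \<le> snd t)" using m mm by auto
  next
    fix y assume y: "y \<in> ?A \<and> (\<forall>t\<in>?A. snd y \<le> snd t)"
    then have "snd y = snd m" using m mm by (meson order_antisym)
    then show "y = m" using y m assms inj_onD[of snd S y m] by auto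
  qed
  then show ?thesis using m mm by auto
qed


definition sel :: "nat \<Rightarrow> square lrbt \<Rightarrow> square" where
  "sel j u = (if j = 0 then smax (right u) else if j = 1 then smin (right u)
     else if j = 2 then smin (left u) else smax (left u))"

definition jdx :: "square lrbt \<Rightarrow> square \<Rightarrow> nat" where
  "jdx T s = (if attains T s (N_NE T s) then 0
        else if attains T s (N_SE T s) then 1
        else if attains T s (N_SW T s) then 2 else 3)"

lemma col_eq: "col T s = (if hN T s = 0 then 0 else 4 * hN T s + jdx T s)"
  unfolding col_def jdx_def by simp

lemma jdx_lt: "jdx T s < 4" unfolding jdx_def by simp

lemma N_all_sub: "N_all T s \<subseteq> insert (Lf s) (subtrees T)"
  unfolding N_all_def N_NE_def N_SE_def N_SW_def N_NW_def by auto

lemma N_all_finite: "finite (N_all T s)"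
  using N_all_sub finite_subtrees by (metis finite_insert finite_subset)

lemma hN_ge: "v \<in> N_all T s \<Longrightarrow> height v \<le> hN T s"
  unfolding hN_def using N_all_finite by auto

lemma height_child: "is_internal w \<Longrightarrow> left w = u \<or> right w = u \<Longrightarrow> height u < height w"
  by (cases w) auto

lemma parent_hN:
  assumes "set (leaves T) \<subseteq> S" "inj_on snd S" "u \<in> subtrees T" "u \<noteq> T"
    "m = smax u \<or> m = smin u"
  shows "height u < hN T m"
proof -
  obtain w where w: "w \<in> subtrees T" "is_internal w" "left w = u \<or> right w = u"
    using subtree_parent[OF assms(3,4)] by blast
  have "w \<in> N_all T m" using w assms(5) unfolding N_all_def N_NE_def N_SE_def N_SW_def N_NW_def
    by auto
  then have "height w \<le> hN T m" by (rule hN_ge)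
  moreover have "height u < height w" using height_child w by blast
  ultimately show ?thesis by simp
qed

lemma witness:
  assumes "hN T s \<ge> 1"
  shows "\<exists>u\<in>subtrees T. is_internal u \<and> height u = hN T s \<and> sel (jdx T s) u = s"
proof -
  have fin: "finite (N_all T s)" by (rule N_all_finite)
  have "hN T s \<in> height ` N_all T s" unfolding hN_def
    by (rule Max_in) (use fin in \<open>auto simp: N_all_def\<close>)
  then obtain v where v: "v \<in> N_all T s" "height v = hN T s" by auto
  have "v \<noteq> Lf s" using v assms by auto
  then have v4: "v \<in> N_NE T s \<or> v \<in> N_SE T s \<or> v \<in> N_SW T s \<or> v \<in> N_NW T s"
    using v unfolding N_all_def by auto
  have att: "attains T s A" if "A \<subseteq> N_all T s" "v \<in> A" for A
  proof -
    have fA: "finite A" using fin that finite_subset by blast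
    have "Max (height ` A) \<le> hN T s"
      using that fA hN_ge[of _ T s] by (subst Max_le_iff) auto
    moreover have "height v \<le> Max (height ` A)" using fA that by auto
    ultimately show ?thesis unfolding attains_def using v that by auto
  qed
  have ex: "\<exists>u\<in>A. height u = hN T s" if "attains T s A" "A \<subseteq> N_all T s" for A
  proof -
    have fA: "finite A" using fin that finite_subset by blast
    have "Max (height ` A) \<in> height ` A" using that fA unfolding attains_def by (intro Max_in) auto
    then show ?thesis using that unfolding attains_def by auto
  qed
  have subs: "N_NE T s \<subseteq> N_all T s" "N_SE T s \<subseteq> N_all T s" "N_SW T s \<subseteq> N_all T s"
    "N_NW T s \<subseteq> N_all T s" unfolding N_all_def by auto
  show ?thesis
  proof (cases "attains T s (N_NE T s)")
    case True
    then obtain u where "u \<in> N_NE T s" "height u = hN T s" using ex subs by blast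
    then show ?thesis using True unfolding N_NE_def jdx_def sel_def by auto
  next
    case F1: False
    show ?thesis
    proof (cases "attains T s (N_SE T s)")
      case True
      then obtain u where "u \<in> N_SE T s" "height u = hN T s" using ex subs by blast
      then show ?thesis using True F1 unfolding N_SE_def jdx_def sel_def by auto
    next
      case F2: False
      show ?thesis
      proof (cases "attains T s (N_SW T s)")
        case True
        then obtain u where "u \<in> N_SW T s" "height u = hN T s" using ex subs by blast
        then show ?thesis using True F1 F2 unfolding N_SW_def jdx_def sel_def by auto
      next
        case F3: False
        have "v \<in> N_NW T s" using v4 att subs F1 F2 F3 by blast
        then show ?thesis using v F1 F2 F3 unfolding N_NW_def jdx_def sel_def by auto
      qed
    qed
  qed
qed

lemma sel_mem:
  assumes "set (leaves T) \<subseteq> S" "inj_on snd S" "u \<in> subtrees T" "is_internal u" "sel j u = s"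
  shows "s \<in> set (leaves u)"
proof -
  obtain c k l r where u: "u = Nd c k l r" using assms(4) by (cases u) auto
  have lu: "set (leaves u) \<subseteq> S" using subtree_leaves[OF assms(3)] assms(1) by auto
  have "set (leaves l) \<subseteq> S" "set (leaves r) \<subseteq> S" using lu u by auto
  then show ?thesis using assms(5) smax_prop[of l S] smin_prop[of l S] smax_prop[of r S]
      smin_prop[of r S] assms(2) u unfolding sel_def by (auto split: if_splits)
qed

lemma lemmaA:
  assumes "\<forall>s\<in>S. 0 \<le> fst s \<and> fst s \<le> 1 \<and> 0 \<le> snd s \<and> snd s \<le> 1"
    "set (leaves T) = S" "inj_on snd S" "u \<in> subtrees T" "u \<noteq> T"
    "\<forall>b\<in>set (leaves u). fst p \<le> fst b \<and> fst b \<le> fst p + 1"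
    "a \<in> set (leaves u)" "p \<in> sq a"
  shows "\<exists>m\<in>S. p \<in> sq m \<and> height u < hN T m"
proof -
  have lu: "set (leaves u) \<subseteq> S" using subtree_leaves[OF assms(4)] assms(2) by auto
  show ?thesis
  proof (cases "snd p \<ge> 0")
    case True
    let ?m = "smax u"
    have m: "?m \<in> set (leaves u)" "snd a \<le> snd ?m" using smax_prop[OF lu assms(3)] assms(7) by auto
    have "p \<in> sq ?m" using m assms(6,8) assms(1) lu True unfolding sq_def by force
    moreover have "height u < hN T ?m" using parent_hN[of T S u ?m] assms lu by auto
    ultimately show ?thesis using m lu by blast
  next
    case False
    let ?m = "smin u"
    have m: "?m \<in> set (leaves u)" "snd ?m \<le> snd a" using smin_prop[OF lu assms(3)] assms(7) by auto
    have "p \<in> sq ?m" using m assms(6,8) assms(1) lu False unfolding sq_def by force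
    moreover have "height u < hN T ?m" using parent_hN[of T S u ?m] assms lu by auto
    ultimately show ?thesis using m lu by blast
  qed
qed


lemma key:
  assumes "\<forall>s\<in>S. 0 \<le> fst s \<and> fst s \<le> 1 \<and> 0 \<le> snd s \<and> snd s \<le> 1"
    "set (leaves T) = S" "inj_on snd S" "u1 \<in> subtrees T" "u2 \<in> subtrees T" "u1 \<noteq> u2"
    "height u1 = height u2" "s \<in> set (leaves u1)" "t \<in> set (leaves u2)" "p \<in> sq s" "p \<in> sq t"
    "\<forall>a\<in>set (leaves u1). \<forall>b\<in>set (leaves u2). fst a < fst b"
  shows "\<exists>m\<in>S. p \<in> sq m \<and> height u1 < hN T m"
proof -
  have n1: "u1 \<noteq> T" using subtree_height[OF assms(5)] assms(6,7) by auto
  have n2: "u2 \<noteq> T" using subtree_height[OF assms(4)] assms(6,7) by auto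
  have l1: "set (leaves u1) \<subseteq> S" using subtree_leaves[OF assms(4)] assms(2) by auto
  have l2: "set (leaves u2) \<subseteq> S" using subtree_leaves[OF assms(5)] assms(2) by auto
  show ?thesis
  proof (cases "fst p \<ge> 0")
    case True
    have "\<forall>b\<in>set (leaves u2). fst p \<le> fst b \<and> fst b \<le> fst p + 1"
    proof
      fix b assume b: "b \<in> set (leaves u2)"
      have "fst s < fst b" using assms(12) assms(8) b by auto
      moreover have "fst p \<le> fst s" using assms(10) unfolding sq_def by auto
      moreover have "fst b \<le> 1" using assms(1) l2 b by auto
      ultimately show "fst p \<le> fst b \<and> fst b \<le> fst p + 1" using True by auto
    qed
    then show ?thesis using lemmaA[OF assms(1,2,3,5) n2 _ assms(9,11)] assms(7) by auto
  next
    case False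
    have "\<forall>b\<in>set (leaves u1). fst p \<le> fst b \<and> fst b \<le> fst p + 1"
    proof
      fix b assume b: "b \<in> set (leaves u1)"
      have "fst b < fst t" using assms(12) assms(9) b by auto
      moreover have "fst t \<le> fst p + 1" using assms(11) unfolding sq_def by auto
      moreover have "0 \<le> fst b" using assms(1) l1 b by auto
      ultimately show "fst p \<le> fst b \<and> fst b \<le> fst p + 1" using False by auto
    qed
    then show ?thesis using lemmaA[OF assms(1,2,3,4) n1 _ assms(8,10)] by auto
  qed
qed

lemma leaf_subtree: "a \<in> set (leaves T) \<Longrightarrow> Lf a \<in> subtrees T"
  by (induction T) auto

theorem mainTheorem3:
  fixes S :: "square set" and T :: "square lrbt"
  assumes "finite S"
    and "\<forall>s\<in>S. (0, 0) \<in> sq s"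
    and "inj_on fst S"
    and "inj_on snd S"
    and "is_lrb_tree_of T S"
  shows "conflict_free S (col T)"
  unfolding conflict_free_def
proof (intro allI impI)
  fix p assume pex: "\<exists>s\<in>S. p \<in> sq s"
  have bnd: "\<forall>s\<in>S. 0 \<le> fst s \<and> fst s \<le> 1 \<and> 0 \<le> snd s \<and> snd s \<le> 1"
    using assms(2) unfolding sq_def by auto
  have LT: "set (leaves T) = S" "search_ok T" using assms(5) unfolding is_lrb_tree_of_def by auto
  define P where "P = {s\<in>S. p \<in> sq s}"
  have finP: "finite P" using assms(1) unfolding P_def by auto
  have neP: "P \<noteq> {}" using pex unfolding P_def by auto
  define H where "H = Max (hN T ` P)"
  have "H \<in> hN T ` P" unfolding H_def using finP neP by (intro Max_in) auto
  then obtain s where s: "s \<in> P" "hN T s = H" by auto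
  have Hmax: "\<And>t. t \<in> P \<Longrightarrow> hN T t \<le> H" unfolding H_def using finP by auto
  show "\<exists>s\<in>S. p \<in> sq s \<and> (\<forall>t\<in>S. t \<noteq> s \<and> p \<in> sq t \<longrightarrow> col T t \<noteq> col T s)"
  proof (rule bexI[of _ s], intro conjI ballI impI notI)
    show "s \<in> S" "p \<in> sq s" using s unfolding P_def by auto
  next
    fix t assume t: "t \<in> S" "t \<noteq> s \<and> p \<in> sq t" and ceq: "col T t = col T s"
    have sS: "s \<in> S" "p \<in> sq s" using s unfolding P_def by auto
    show False
    proof (cases T)
      case (Lf x)
      then show False using LT t sS by auto
    next
      case (Nd c k l r)
      have hpos: "hN T a \<ge> 1" if "a \<in> S" for a
      proof -
        have "Lf a \<in> subtrees T" using leaf_subtree that LT by auto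
        moreover have "Lf a \<noteq> T" using Nd by auto
        moreover have "a = smax (Lf a)" using smax_prop[of "Lf a" S] that assms(4) by auto
        ultimately have "height (Lf a) < hN T a" using parent_hN[of T S "Lf a" a] LT assms(4) by auto
        then show ?thesis by simp
      qed
      have eqs: "hN T t = hN T s \<and> jdx T t = jdx T s"
        using ceq hpos[OF t(1)] hpos[OF sS(1)] jdx_lt[of T t] jdx_lt[of T s]
        unfolding col_eq by (auto split: if_splits; presburger)
      obtain us where us: "us \<in> subtrees T" "is_internal us" "height us = H" "sel (jdx T s) us = s"
        using witness[of T s] hpos[OF sS(1)] s by auto
      obtain ut where ut: "ut \<in> subtrees T" "is_internal ut" "height ut = H" "sel (jdx T s) ut = t"
        using witness[of T t] hpos[OF t(1)] s eqs by auto
      have sin: "s \<in> set (leaves us)" using sel_mem[of T S us "jdx T s" s] us LT assms(4) by auto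
      have tin: "t \<in> set (leaves ut)" using sel_mem[of T S ut "jdx T s" t] ut LT assms(4) by auto
      have "us \<noteq> ut" using us ut t by auto
      then consider
        "\<forall>a\<in>set (leaves us). \<forall>b\<in>set (leaves ut). fst a < fst b" |
        "\<forall>a\<in>set (leaves ut). \<forall>b\<in>set (leaves us). fst a < fst b"
        using subtree_order[OF LT(2) us(1) ut(1)] us ut by auto
      then obtain m where m: "m \<in> S" "p \<in> sq m" "H < hN T m"
      proof cases
        case 1
        then show ?thesis using key[OF bnd LT(1) assms(4) us(1) ut(1) \<open>us \<noteq> ut\<close> _ sin tin sS(2)]
            t us ut that by auto
      next
        case 2
        then show ?thesis using key[OF bnd LT(1) assms(4) ut(1) us(1) _ _ tin sin _ sS(2)]
            t us ut that \<open>us \<noteq> ut\<close> by auto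
      qed
      then show False using Hmax[of m] unfolding P_def by auto
    qed
  qed
qed

end
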